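(* Let $n\ge2$. There exists a constant $C>0$ depending only on $n$ such that for every $u\in C_c^\infty(\overline{\mathbb R_+^n})$, $$\int_{\mathbb R_+^n}|u|\, \mathrm d\tilde{\mu}_n(x)\leq C\Big[\int_{\partial\mathbb R_+^n}|u|\,\mathrm d\mu_n(x')+\Big(\int_{\mathbb R_+^n}|\nabla u|^n\mathrm dx\Big)^{\frac 1 n}\Big]$$ and $$\int_{\partial\mathbb R_+^n}|u|\,\mathrm d\mu_n(x')\leq C\Big[\int_{\mathbb R_+^n}|u|\, \mathrm d\tilde{\mu}_n(x)+\Big(\int_{\mathbb R_+^n}|\nabla u|^n\mathrm dx\Big)^{\frac 1 n}\Big].$$
   Context: $\mathbb R_+^n=\{x=(x',t):x'\in\mathbb R^{n-1},t>0\}$, $\partial\mathbb R_+^n\cong\mathbb R^{n-1}$. $\sigma_{k}=|\mathbb S^{k}|$. $\mathrm d\mu_n(x')=\frac{2\,\mathrm dx'}{\sigma_{n-1}(1+|x'|^2)^{n/2}}$ on $\partial\mathbb R^n_+$, and $\mathrm d\tilde\mu_n(x)=\mu_{n+1}(x)\,\mathrm dx$ on $\mathbb R^n_+$ with $\mu_{n+1}(x',t)=\frac{2}{\sigma_{n}((1+t)^2+|x'|^2)^{(n+1)/2}}$. $C_c^\infty(\overline{\mathbb R_+^n})$: smooth functions on $\overline{\mathbb R^n_+}$ with compact support in $\mathbb R^n$. *)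

theory Defs
  imports "HOL-Analysis.Analysis"
begin

text \<open>sigma k = |S^k|, the surface measure of the unit sphere in R^(k+1).\<close>
definition sphere_area :: "nat \<Rightarrow> real" where
  "sphere_area k = 2 * pi powr (real (k + 1) / 2) / Gamma (real (k + 1) / 2)"

fun dderiv :: "'a::real_normed_vector list \<Rightarrow> ('a \<Rightarrow> real) \<Rightarrow> 'a \<Rightarrow> real" where
  "dderiv [] f = f"
| "dderiv (v # vs) f = (\<lambda>x. frechet_derivative (dderiv vs f) (at x) v)"

definition smooth_fun :: "('a::real_normed_vector \<Rightarrow> real) \<Rightarrow> bool" where
  "smooth_fun f \<longleftrightarrow> (\<forall>vs x. dderiv vs f differentiable (at x))"

definition grad_norm :: "('a::euclidean_space \<Rightarrow> real) \<Rightarrow> 'a \<Rightarrow> real" where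
  "grad_norm f x = sqrt (\<Sum>b\<in>Basis. (frechet_derivative f (at x) b)\<^sup>2)"

text \<open>Points of R^n are pairs (x', t) with x' in R^(n-1) = real^'m, so n = CARD('m) + 1.\<close>
definition upper_half :: "((real^('m::finite)) \<times> real) set" where
  "upper_half = {(x', t). t > 0}"

definition mu_bdry :: "nat \<Rightarrow> real^'m \<Rightarrow> real" where
  "mu_bdry n x' = 2 / (sphere_area (n - 1) * (1 + (norm x')\<^sup>2) powr (real n / 2))"

definition mu_int :: "nat \<Rightarrow> ((real^'m) \<times> real) \<Rightarrow> real" where
  "mu_int n p = 2 / (sphere_area n * ((1 + snd p)\<^sup>2 + (norm (fst p))\<^sup>2) powr (real (n + 1) / 2))"

end

theory Submission
  imports Defs
begin

lemma tail_int:
  fixes c p s :: real assumes p: "p > 1" and cs: "c + s > 0"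
  shows "(\<integral>\<^sup>+t. ennreal ((c + t) powr (-p)) * indicator {s..} t \<partial>lborel)
     = ennreal ((c + s) powr (1 - p) / (p - 1))"
proof -
  let ?F = "\<lambda>t::real. - ((c + t) powr (1 - p) / (p - 1))"
  have "(\<integral>\<^sup>+t\<in>{s..}. ennreal ((c + t) powr (-p)) \<partial>lborel) = ennreal (0 - ?F s)"
  proof (rule nn_integral_FTC_atLeast)
    show "(\<lambda>t. (c + t) powr (-p)) \<in> borel_measurable borel" by measurable
    fix x assume "s \<le> x"
    then have x: "c + x > 0" using cs by linarith
    have d1: "((\<lambda>t. (c + t) powr (1 - p)) has_real_derivative (1 - p) * (c + x) powr (1 - p - 1)) (at x)"
    proof -
      have "((\<lambda>t. c + t) has_real_derivative 1) (at x)" by (auto intro!: derivative_eq_intros)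
      from DERIV_chain2[OF has_real_derivative_powr[OF x, of "1 - p"] this] show ?thesis by simp
    qed
    have "(?F has_real_derivative - ((1 - p) * (c + x) powr (1 - p - 1) / (p - 1))) (at x)"
      using DERIV_minus[OF DERIV_cdivide[OF d1, of "p-1"]] by simp
    moreover have "- ((1 - p) * (c + x) powr (1 - p - 1) / (p - 1)) = (c + x) powr (-p)"
      using p by (simp add: field_simps)
    ultimately show "(?F has_real_derivative (c + x) powr (-p)) (at x)" by simp
    show "0 \<le> (c + x) powr (-p)" by simp
  next
    have "((\<lambda>t. (c + t) powr (1 - p)) \<longlongrightarrow> 0) at_top"
      using p by (intro tendsto_neg_powr) (auto intro: filterlim_tendsto_add_at_top[OF tendsto_const filterlim_ident])
    then have "((\<lambda>t. - ((c + t) powr (1 - p) / (p - 1))) \<longlongrightarrow> - (0 / (p - 1))) at_top"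
      using p by (intro tendsto_minus tendsto_divide tendsto_const) auto
    then show "(?F \<longlongrightarrow> 0) at_top" by simp
  qed
  then show ?thesis by simp
qed

lemma line_int:
  fixes p :: real assumes p: "p > 1"
  shows "(\<integral>\<^sup>+y. ennreal ((1 + \<bar>y\<bar>) powr (-p)) \<partial>lborel) \<le> ennreal (2 / (p - 1))"
proof -
  define h where "h y = ennreal ((1 + y) powr (-p)) * indicator {0..} y" for y :: real
  have hm: "h \<in> borel_measurable borel" unfolding h_def by measurable
  have hi: "integral\<^sup>N lborel h = ennreal (1 / (p - 1))"
    unfolding h_def using tail_int[OF p, of 1 0] by simp
  have "(\<integral>\<^sup>+y. ennreal ((1 + \<bar>y\<bar>) powr (-p)) \<partial>lborel) \<le> (\<integral>\<^sup>+y. h y + h (-y) \<partial>lborel)"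
    by (intro nn_integral_mono) (auto simp: h_def split: split_indicator)
  also have "\<dots> = integral\<^sup>N lborel h + (\<integral>\<^sup>+y. h (-y) \<partial>lborel)"
    by (intro nn_integral_add) (use hm in measurable)
  also have "(\<integral>\<^sup>+y. h (-y) \<partial>lborel) = integral\<^sup>N lborel h"
    using nn_integral_real_affine[OF hm, of "-1" 0] by simp
  finally show ?thesis using p by (simp add: hi flip: ennreal_plus)
qed

lemma prod_int:
  fixes p :: real assumes p: "p > 1"
  shows "(\<integral>\<^sup>+x. ennreal (\<Prod>b\<in>(Basis::'a::euclidean_space set). (1 + \<bar>x \<bullet> b\<bar>) powr (-p)) \<partial>lborel)
     \<le> ennreal ((2 / (p - 1)) ^ DIM('a))"
proof -
  have "(\<integral>\<^sup>+x. ennreal (\<Prod>b\<in>(Basis::'a set). (1 + \<bar>x \<bullet> b\<bar>) powr (-p)) \<partial>lborel)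
     = (\<integral>\<^sup>+x. (\<Prod>b\<in>(Basis::'a set). ennreal ((1 + \<bar>x \<bullet> b\<bar>) powr (-p))) \<partial>lborel)"
    by (simp add: prod_ennreal)
  also have "\<dots> = (\<Prod>b\<in>(Basis::'a set). (\<integral>\<^sup>+y. ennreal ((1 + \<bar>y\<bar>) powr (-p)) \<partial>lborel))"
    by (rule nn_integral_lborel_prod) auto
  also have "\<dots> \<le> (\<Prod>b\<in>(Basis::'a set). ennreal (2 / (p - 1)))"
    using power_mono[OF line_int[OF p], of "DIM('a)"] by simp
  also have "\<dots> = ennreal ((2 / (p - 1)) ^ DIM('a))"
    using p by (simp add: prod_ennreal ennreal_power)
  finally show ?thesis .
qed

lemma norm_prod_bound:
  fixes x :: "'a::euclidean_space" and q :: real assumes q: "q \<ge> 0"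
  shows "(1 + norm x) powr (-q) \<le> (\<Prod>b\<in>Basis. (1 + \<bar>x \<bullet> b\<bar>) powr (-q / DIM('a)))"
proof -
  have "(1 + norm x) powr (-q) = ((1 + norm x) powr (-q / DIM('a))) ^ DIM('a)"
  proof -
    have "1 + norm x > 0" by (simp add: add_pos_nonneg)
    then have pos: "(1 + norm x) powr (-q / DIM('a)) > 0" by simp
    have "((1 + norm x) powr (-q / DIM('a))) ^ DIM('a) = ((1 + norm x) powr (-q / DIM('a))) powr DIM('a)"
      using powr_realpow[OF pos] by simp
    also have "\<dots> = (1 + norm x) powr (-q)" by (simp add: powr_powr)
    finally show ?thesis by simp
  qed
  also have "\<dots> = (\<Prod>b\<in>(Basis::'a set). (1 + norm x) powr (-q / DIM('a)))" by simp
  also have "\<dots> \<le> (\<Prod>b\<in>Basis. (1 + \<bar>x \<bullet> b\<bar>) powr (-q / DIM('a)))"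
  proof (intro prod_mono conjI)
    fix b :: 'a assume b: "b \<in> Basis"
    show "0 \<le> (1 + norm x) powr (-q / DIM('a))" by simp
    show "(1 + norm x) powr (-q / DIM('a)) \<le> (1 + \<bar>x \<bullet> b\<bar>) powr (-q / DIM('a))"
      using Basis_le_norm[OF b, of x] q by (intro powr_mono2') (auto simp: divide_nonneg_pos)
  qed
  finally show ?thesis .
qed

lemma holder_nn:
  fixes G w :: "'b \<Rightarrow> real" and p q E A :: real
  assumes p: "p > 1" and q: "q > 1" and pq: "1/p + 1/q = 1"
    and Gm[measurable]: "G \<in> borel_measurable M" and wm[measurable]: "w \<in> borel_measurable M"
    and G0: "\<And>x. G x \<ge> 0" and w0: "\<And>x. w x \<ge> 0"
    and E: "(\<integral>\<^sup>+x. ennreal (G x powr p) \<partial>M) = ennreal E" and E0: "E \<ge> 0"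
    and A: "(\<integral>\<^sup>+x. ennreal (w x powr q) \<partial>M) \<le> ennreal A" and A0: "A \<ge> 0"
  shows "(\<integral>\<^sup>+x. ennreal (G x * w x) \<partial>M) \<le> ennreal (E powr (1/p) * (1/p + A/q))"
proof (cases "E = 0")
  case True
  then have "AE x in M. ennreal (G x powr p) = 0"
    using E by (subst nn_integral_0_iff_AE[symmetric]) auto
  then have "AE x in M. ennreal (G x * w x) = 0"
    by eventually_elim (use G0 in auto)
  then have "(\<integral>\<^sup>+x. ennreal (G x * w x) \<partial>M) = 0"
    by (subst nn_integral_0_iff_AE) auto
  then show ?thesis by simp
next
  case False
  with E0 have Ep: "E > 0" by simp
  define e where "e = E powr (-1/(p*q))"
  have e0: "e > 0" using Ep by (simp add: e_def)
  have pt: "G x * w x \<le> e powr p / p * G x powr p + e powr (-q) / q * w x powr q" for x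
  proof -
    have "G x * w x = (e * G x) * (w x / e)" using e0 by simp
    also have "\<dots> \<le> (e * G x) powr p / p + (w x / e) powr q / q"
      by (rule Youngs_inequality[OF p q pq]) (use e0 G0 w0 in auto)
    also have "(e * G x) powr p = e powr p * G x powr p"
      using e0 G0 by (simp add: powr_mult)
    also have "(w x / e) powr q = e powr (-q) * w x powr q"
      using e0 w0[of x] by (simp add: powr_divide powr_minus_divide)
    finally show ?thesis by simp
  qed
  have "(\<integral>\<^sup>+x. ennreal (G x * w x) \<partial>M)
      \<le> (\<integral>\<^sup>+x. ennreal (e powr p / p) * ennreal (G x powr p) + ennreal (e powr (-q) / q) * ennreal (w x powr q) \<partial>M)"
    using p q by (intro nn_integral_mono) (auto simp flip: ennreal_mult ennreal_plus intro!: ennreal_leI order.trans[OF pt])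
  also have "\<dots> = ennreal (e powr p / p) * (\<integral>\<^sup>+x. ennreal (G x powr p) \<partial>M) + ennreal (e powr (-q) / q) * (\<integral>\<^sup>+x. ennreal (w x powr q) \<partial>M)"
    by (simp add: nn_integral_add nn_integral_cmult)
  also have "\<dots> \<le> ennreal (e powr p / p) * ennreal E + ennreal (e powr (-q) / q) * ennreal A"
    using A E by (intro add_mono mult_left_mono) auto
  also have "\<dots> = ennreal (e powr p / p * E + e powr (-q) / q * A)"
  proof -
    have "ennreal (e powr p / p) * ennreal E = ennreal (e powr p / p * E)"
      by (rule ennreal_mult[symmetric]) (use p E0 in auto)
    moreover have "ennreal (e powr (-q) / q) * ennreal A = ennreal (e powr (-q) / q * A)"
      by (rule ennreal_mult[symmetric]) (use q A0 in auto)
    moreover have "ennreal (e powr p / p * E) + ennreal (e powr (-q) / q * A) = ennreal (e powr p / p * E + e powr (-q) / q * A)"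
      by (rule ennreal_plus[symmetric]) (use p q E0 A0 in auto)
    ultimately show ?thesis by simp
  qed
  also have "e powr p / p * E + e powr (-q) / q * A = E powr (1/p) * (1/p + A/q)"
  proof -
    have "e powr p = E powr (-1/(p*q) * p)" by (simp add: e_def powr_powr)
    also have "-1/(p*q) * p = -1/q" using p by simp
    finally have ep: "e powr p = E powr (-1/q)" .
    have "e powr p * E = E powr (-1/q) * E powr 1" using Ep by (simp add: ep)
    also have "\<dots> = E powr (-1/q + 1)" by (rule powr_add[symmetric])
    also have "-1/q + 1 = 1/p" using pq by simp
    finally have 1: "e powr p * E = E powr (1/p)" .
    have "e powr (-q) = E powr (-1/(p*q) * (-q))" by (simp add: e_def powr_powr)
    also have "-1/(p*q) * (-q) = 1/p" using q by simp
    finally have 2: "e powr (-q) = E powr (1/p)" .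
    show ?thesis using 1 2 by (simp add: field_simps)
  qed
  finally show ?thesis .
qed

lemma weight_int:
  fixes n :: nat
  assumes n: "n = DIM('a::euclidean_space) + 1"
  shows "(\<integral>\<^sup>+x. \<integral>\<^sup>+s. ennreal ((1 + norm (x::'a) + s) powr (-(real n * (real n / (real n - 1))))) * indicator {0..} s \<partial>lborel \<partial>lborel)
    \<le> ennreal ((2 / (real n / DIM('a) - 1)) ^ DIM('a) / (real n * (real n / (real n - 1)) - 1))"
proof -
  define P where "P = real n * (real n / (real n - 1))"
  define d where "d = DIM('a)"
  have d1: "d \<ge> 1" by (simp add: d_def DIM_positive Suc_leI)
  have nd: "real n = real d + 1" using n d_def by simp
  have P1: "P \<ge> real n + 1"
  proof -
    have "(real n + 1) * (real n - 1) \<le> real n * real n" by (simp add: algebra_simps)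
    then show ?thesis using d1 nd by (simp add: P_def field_simps)
  qed
  have Pg: "P > 1" using P1 nd by simp
  have pd: "real n / d > 1" using d1 nd by (simp add: field_simps)
  have "(\<integral>\<^sup>+x. \<integral>\<^sup>+s. ennreal ((1 + norm (x::'a) + s) powr (-P)) * indicator {0..} s \<partial>lborel \<partial>lborel)
      = (\<integral>\<^sup>+x. ennreal ((1 + norm (x::'a)) powr (1 - P) / (P - 1)) \<partial>lborel)"
    by (intro nn_integral_cong) (use tail_int[OF Pg] in \<open>auto simp: add_pos_nonneg\<close>)
  also have "\<dots> \<le> (\<integral>\<^sup>+x. ennreal (1 / (P - 1)) * ennreal (\<Prod>b\<in>(Basis::'a set). (1 + \<bar>x \<bullet> b\<bar>) powr (-real n / d)) \<partial>lborel)"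
  proof (intro nn_integral_mono)
    fix x :: 'a
    have "(1 + norm x) powr (1 - P) \<le> (1 + norm x) powr (- real n)"
      using P1 by (intro powr_mono) auto
    also have "\<dots> \<le> (\<Prod>b\<in>Basis. (1 + \<bar>x \<bullet> b\<bar>) powr (-real n / d))"
      using norm_prod_bound[of "real n" x] by (simp add: d_def)
    finally have "(1 + norm x) powr (1 - P) / (P - 1) \<le> 1 / (P - 1) * (\<Prod>b\<in>Basis. (1 + \<bar>x \<bullet> b\<bar>) powr (-real n / d))"
      using Pg by (simp add: divide_right_mono)
    then show "ennreal ((1 + norm x) powr (1 - P) / (P - 1)) \<le> ennreal (1 / (P - 1)) * ennreal (\<Prod>b\<in>Basis. (1 + \<bar>x \<bullet> b\<bar>) powr (-real n / d))"
      using Pg by (subst ennreal_mult[symmetric]) (auto intro!: ennreal_leI prod_nonneg)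
  qed
  also have "\<dots> = ennreal (1 / (P - 1)) * (\<integral>\<^sup>+x. ennreal (\<Prod>b\<in>(Basis::'a set). (1 + \<bar>x \<bullet> b\<bar>) powr (-(real n / d))) \<partial>lborel)"
    by (subst nn_integral_cmult) auto
  also have "\<dots> \<le> ennreal (1 / (P - 1)) * ennreal ((2 / (real n / d - 1)) ^ DIM('a))"
    by (intro mult_left_mono prod_int pd) auto
  also have "\<dots> = ennreal ((2 / (real n / DIM('a) - 1)) ^ DIM('a) / (P - 1))"
    using Pg pd by (subst ennreal_mult[symmetric]) (auto simp: d_def)
  finally show ?thesis by (simp add: P_def)
qed

lemma pred_Icc_meas[measurable]:
  fixes f g :: "'b \<Rightarrow> real"
  assumes [measurable]: "f \<in> borel_measurable M" "g \<in> borel_measurable M"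
  shows "Measurable.pred M (\<lambda>x. f x \<in> {0..g x})"
  unfolding atLeastAtMost_iff by measurable

lemma line1:
  fixes f g m :: "real \<Rightarrow> real" and a C e :: real
  assumes fm[measurable]: "f \<in> borel_measurable borel" and gm[measurable]: "g \<in> borel_measurable borel"
    and mm[measurable]: "m \<in> borel_measurable borel"
    and g0: "\<And>s. g s \<ge> 0" and m0: "\<And>t. m t \<ge> 0"
    and a: "a > 0" and e: "e > 0" and C: "C \<ge> 0"
    and ftc: "\<And>t. t \<ge> 0 \<Longrightarrow> ennreal \<bar>f t - f 0\<bar> \<le> (\<integral>\<^sup>+s. ennreal (g s) * indicator {0..t} s \<partial>lborel)"
    and mb: "\<And>t. t \<ge> 0 \<Longrightarrow> m t \<le> C * (a + t) powr (-(e + 1))"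
  shows "(\<integral>\<^sup>+t. ennreal (indicator {0<..} t * \<bar>f t\<bar> * m t) \<partial>lborel)
    \<le> ennreal \<bar>f 0\<bar> * ennreal (C * (a powr (-e) / e))
       + ennreal (C / e) * (\<integral>\<^sup>+s. ennreal (g s * (a + s) powr (-e)) * indicator {0..} s \<partial>lborel)"
proof -
  have mb2: "\<And>t. t \<ge> 0 \<Longrightarrow> m t \<le> C * (a + t) powr (- e - 1)" using mb by simp
  define M where "M t = ennreal (indicator {0..} t * m t)" for t
  define \<Phi> where "\<Phi> t = (\<integral>\<^sup>+s. ennreal (g s) * indicator {0..t} s \<partial>lborel)" for t
  have Mm[measurable]: "M \<in> borel_measurable borel" unfolding M_def by measurable
  have "(\<lambda>t. \<integral>\<^sup>+s. ennreal (g s) * indicator {0..t} s \<partial>lborel) \<in> borel_measurable lborel"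
    by (rule lborel.borel_measurable_nn_integral) measurable
  then have Phim[measurable]: "\<Phi> \<in> borel_measurable borel" unfolding \<Phi>_def[abs_def] by simp
  have tail: "(\<integral>\<^sup>+t. ennreal (C * (a + t) powr (-(e + 1))) * indicator {s..} t \<partial>lborel) = ennreal (C * ((a + s) powr (-e) / e))"
    if "s \<ge> 0" for s
  proof -
    have "(\<integral>\<^sup>+t. ennreal (C * (a + t) powr (-(e + 1))) * indicator {s..} t \<partial>lborel)
        = (\<integral>\<^sup>+t. ennreal C * (ennreal ((a + t) powr (-(e + 1))) * indicator {s..} t) \<partial>lborel)"
      using C by (intro nn_integral_cong) (simp add: ennreal_mult mult.assoc)
    also have "\<dots> = ennreal C * ennreal ((a + s) powr (1 - (e + 1)) / (e + 1 - 1))"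
      using tail_int[of "e + 1" a s] e a that by (subst nn_integral_cmult) auto
    also have "\<dots> = ennreal (C * ((a + s) powr (-e) / e))"
      using ennreal_mult'[OF C, of "(a + s) powr (-e) / e"] by simp
    finally show ?thesis .
  qed
  have "(\<integral>\<^sup>+t. ennreal (indicator {0<..} t * \<bar>f t\<bar> * m t) \<partial>lborel)
      \<le> (\<integral>\<^sup>+t. ennreal \<bar>f 0\<bar> * M t + \<Phi> t * M t \<partial>lborel)"
  proof (intro nn_integral_mono)
    fix t :: real
    show "ennreal (indicator {0<..} t * \<bar>f t\<bar> * m t) \<le> ennreal \<bar>f 0\<bar> * M t + \<Phi> t * M t"
    proof (cases "t > 0")
      case True
      have "ennreal (\<bar>f t\<bar> * m t) \<le> ennreal ((\<bar>f 0\<bar> + \<bar>f t - f 0\<bar>) * m t)"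
        using m0[of t] by (intro ennreal_leI mult_right_mono) auto
      also have "\<dots> = ennreal \<bar>f 0\<bar> * ennreal (m t) + ennreal \<bar>f t - f 0\<bar> * ennreal (m t)"
        using m0[of t] by (simp add: distrib_right ennreal_plus ennreal_mult)
      also have "\<dots> \<le> ennreal \<bar>f 0\<bar> * ennreal (m t) + \<Phi> t * ennreal (m t)"
        using ftc[of t] True unfolding \<Phi>_def by (intro add_mono mult_right_mono) auto
      finally show ?thesis using True by (simp add: M_def)
    qed simp
  qed
  also have "\<dots> = ennreal \<bar>f 0\<bar> * integral\<^sup>N lborel M + (\<integral>\<^sup>+t. \<Phi> t * M t \<partial>lborel)"
    by (subst nn_integral_add) (auto simp: nn_integral_cmult)
  also have "integral\<^sup>N lborel M \<le> ennreal (C * (a powr (-e) / e))"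
  proof -
    have "integral\<^sup>N lborel M \<le> (\<integral>\<^sup>+t. ennreal (C * (a + t) powr (-(e + 1))) * indicator {0..} t \<partial>lborel)"
      unfolding M_def by (intro nn_integral_mono) (auto split: split_indicator intro!: ennreal_leI mb mb2)
    also have "\<dots> = ennreal (C * (a powr (-e) / e))" using tail[of 0] by simp
    finally show ?thesis .
  qed
  also have "(\<integral>\<^sup>+t. \<Phi> t * M t \<partial>lborel) = (\<integral>\<^sup>+t. \<integral>\<^sup>+s. ennreal (g s) * indicator {0..t} s * M t \<partial>lborel \<partial>lborel)"
    unfolding \<Phi>_def by (intro nn_integral_cong) (simp add: nn_integral_multc)
  also have "\<dots> = (\<integral>\<^sup>+s. \<integral>\<^sup>+t. ennreal (g s) * indicator {0..t} s * M t \<partial>lborel \<partial>lborel)"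
    by (rule lborel_pair.Fubini'[symmetric]) measurable
  also have "\<dots> \<le> (\<integral>\<^sup>+s. ennreal (C / e) * (ennreal (g s * (a + s) powr (-e)) * indicator {0..} s) \<partial>lborel)"
  proof (intro nn_integral_mono)
    fix s :: real
    show "(\<integral>\<^sup>+t. ennreal (g s) * indicator {0..t} s * M t \<partial>lborel) \<le> ennreal (C / e) * (ennreal (g s * (a + s) powr (-e)) * indicator {0..} s)"
    proof (cases "s \<ge> 0")
      case True
      have "(\<integral>\<^sup>+t. ennreal (g s) * indicator {0..t} s * M t \<partial>lborel)
          \<le> (\<integral>\<^sup>+t. ennreal (g s) * (ennreal (C * (a + t) powr (-(e + 1))) * indicator {s..} t) \<partial>lborel)"
        using True unfolding M_def
        by (intro nn_integral_mono) (auto split: split_indicator intro!: mult_left_mono ennreal_leI mb mb2)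
      also have "\<dots> = ennreal (g s) * ennreal (C * ((a + s) powr (-e) / e))"
        using tail[OF True] by (subst nn_integral_cmult) auto
      also have "\<dots> = ennreal (C / e) * (ennreal (g s * (a + s) powr (-e)) * indicator {0..} s)"
        using True g0[of s] C e by (simp add: ennreal_mult[symmetric] mult_ac)
      finally show ?thesis .
    qed simp
  qed
  also have "\<dots> = ennreal (C / e) * (\<integral>\<^sup>+s. ennreal (g s * (a + s) powr (-e)) * indicator {0..} s \<partial>lborel)"
    by (subst nn_integral_cmult) auto
  finally show ?thesis by (simp add: add_mono mult_left_mono)
qed

lemma powr_m1_mult: fixes a x :: real assumes "a > 0" shows "a powr (x - 1) * a = a powr x"
  using powr_add[of a "x - 1" 1] assms by simp

lemma line2:
  fixes f g m :: "real \<Rightarrow> real" and a b L D e :: real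
  assumes fm[measurable]: "f \<in> borel_measurable borel" and gm[measurable]: "g \<in> borel_measurable borel"
    and mm[measurable]: "m \<in> borel_measurable borel"
    and g0: "\<And>s. g s \<ge> 0" and m0: "\<And>t. m t \<ge> 0"
    and a: "a \<ge> 1" and e: "e > 0" and L: "L > 0" and D: "D \<ge> 0" and b0: "b \<ge> 0"
    and ftc: "\<And>t. t \<ge> 0 \<Longrightarrow> ennreal \<bar>f t - f 0\<bar> \<le> (\<integral>\<^sup>+s. ennreal (g s) * indicator {0..t} s \<partial>lborel)"
    and ml: "\<And>t. 0 \<le> t \<Longrightarrow> t \<le> a \<Longrightarrow> m t \<ge> L * (2 * a) powr (-(e + 1))"
    and bb: "b \<le> D * a powr (-e)"
  shows "ennreal (\<bar>f 0\<bar> * b)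
    \<le> ennreal (D * 2 powr (e + 1) / L) * (\<integral>\<^sup>+t. ennreal (indicator {0<..} t * \<bar>f t\<bar> * m t) \<partial>lborel)
       + ennreal (D * 2 powr e) * (\<integral>\<^sup>+s. ennreal (g s * (a + s) powr (-e)) * indicator {0..} s \<partial>lborel)"
proof -
  define \<Phi> where "\<Phi> = (\<integral>\<^sup>+s. ennreal (g s) * indicator {0..a} s \<partial>lborel)"
  have a0: "a > 0" using a by simp
  have pt: "ennreal \<bar>f 0\<bar> \<le> ennreal \<bar>f t\<bar> + \<Phi>" if t: "0 \<le> t" "t \<le> a" for t
  proof -
    have "ennreal \<bar>f 0\<bar> \<le> ennreal (\<bar>f t\<bar> + \<bar>f t - f 0\<bar>)" by (intro ennreal_leI) linarith
    also have "\<dots> = ennreal \<bar>f t\<bar> + ennreal \<bar>f t - f 0\<bar>" by (simp add: ennreal_plus)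
    also have "ennreal \<bar>f t - f 0\<bar> \<le> \<Phi>"
      unfolding \<Phi>_def using t by (intro order.trans[OF ftc[OF t(1)]] nn_integral_mono) (auto split: split_indicator)
    finally show ?thesis by (simp add: add_left_mono)
  qed
  have "ennreal a * ennreal \<bar>f 0\<bar> = (\<integral>\<^sup>+t. ennreal \<bar>f 0\<bar> * indicator {0..a} t \<partial>lborel)"
    using a by (simp add: nn_integral_cmult_indicator mult.commute)
  also have "\<dots> \<le> (\<integral>\<^sup>+t. ennreal \<bar>f t\<bar> * indicator {0..a} t + \<Phi> * indicator {0..a} t \<partial>lborel)"
    by (intro nn_integral_mono) (auto split: split_indicator intro: pt)
  also have "\<dots> = (\<integral>\<^sup>+t. ennreal \<bar>f t\<bar> * indicator {0..a} t \<partial>lborel) + \<Phi> * ennreal a"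
    using a by (subst nn_integral_add) (auto simp: nn_integral_cmult_indicator)
  finally have key: "ennreal a * ennreal \<bar>f 0\<bar> \<le> (\<integral>\<^sup>+t. ennreal \<bar>f t\<bar> * indicator {0..a} t \<partial>lborel) + \<Phi> * ennreal a" .
  define K where "K = D * a powr (-e - 1)"
  have K0: "K \<ge> 0" using D by (simp add: K_def)
  have "ennreal (\<bar>f 0\<bar> * b) \<le> ennreal (K * (a * \<bar>f 0\<bar>))"
  proof (intro ennreal_leI)
    have "a powr (-e - 1) * a = a powr (-e)"
      using powr_m1_mult[OF a0, of "-e"] by simp
    then have eq: "K * (a * \<bar>f 0\<bar>) = D * a powr (-e) * \<bar>f 0\<bar>" by (simp add: K_def mult_ac)
    have "\<bar>f 0\<bar> * b \<le> \<bar>f 0\<bar> * (D * a powr (-e))" using bb by (intro mult_left_mono) auto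
    then show "\<bar>f 0\<bar> * b \<le> K * (a * \<bar>f 0\<bar>)" unfolding eq by (simp add: mult_ac)
  qed
  also have "\<dots> = ennreal K * (ennreal a * ennreal \<bar>f 0\<bar>)"
    using K0 a0 by (simp add: ennreal_mult)
  also have "\<dots> \<le> ennreal K * ((\<integral>\<^sup>+t. ennreal \<bar>f t\<bar> * indicator {0..a} t \<partial>lborel) + \<Phi> * ennreal a)"
    by (intro mult_left_mono key) auto
  also have "\<dots> = ennreal K * (\<integral>\<^sup>+t. ennreal \<bar>f t\<bar> * indicator {0..a} t \<partial>lborel) + ennreal (K * a) * \<Phi>"
    using K0 a0 by (simp add: distrib_left ennreal_mult mult_ac)
  also have "ennreal K * (\<integral>\<^sup>+t. ennreal \<bar>f t\<bar> * indicator {0..a} t \<partial>lborel)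
      \<le> ennreal (D * 2 powr (e + 1) / L) * (\<integral>\<^sup>+t. ennreal (indicator {0<..} t * \<bar>f t\<bar> * m t) \<partial>lborel)"
  proof -
    have "ennreal K * (\<integral>\<^sup>+t. ennreal \<bar>f t\<bar> * indicator {0..a} t \<partial>lborel)
        = (\<integral>\<^sup>+t. ennreal K * (ennreal \<bar>f t\<bar> * indicator {0..a} t) \<partial>lborel)"
      by (subst nn_integral_cmult) auto
    also have "\<dots> \<le> (\<integral>\<^sup>+t. ennreal (D * 2 powr (e + 1) / L) * ennreal (indicator {0<..} t * \<bar>f t\<bar> * m t) \<partial>lborel)"
    proof (intro nn_integral_mono_AE)
      show "AE t in lborel. ennreal K * (ennreal \<bar>f t\<bar> * indicator {0..a} t)
          \<le> ennreal (D * 2 powr (e + 1) / L) * ennreal (indicator {0<..} t * \<bar>f t\<bar> * m t)"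
        using AE_lborel_singleton[of 0]
      proof eventually_elim
        fix t :: real assume t0: "t \<noteq> 0"
        show "ennreal K * (ennreal \<bar>f t\<bar> * indicator {0..a} t)
          \<le> ennreal (D * 2 powr (e + 1) / L) * ennreal (indicator {0<..} t * \<bar>f t\<bar> * m t)"
        proof (cases "0 \<le> t \<and> t \<le> a")
          case True
          with t0 have tp: "t > 0" by simp
          have "K \<le> D * 2 powr (e + 1) / L * m t"
          proof -
            have "(2 * a) powr (-(e + 1)) = 2 powr (-(e + 1)) * a powr (-e - 1)"
              using a0 by (simp add: powr_mult)
            then have "L * (2 * a) powr (-(e + 1)) * (2 powr (e + 1) / L) = a powr (-e - 1)"
              using L powr_add[of 2 "1 + e" "- 1 - e"] by (simp add: field_simps)
            then have "a powr (-e - 1) \<le> m t * (2 powr (e + 1) / L)"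
              using ml[of t] True L by (metis divide_nonneg_pos mult_right_mono powr_ge_zero zero_le_numeral)
            then have "D * a powr (-e - 1) \<le> D * (m t * (2 powr (e + 1) / L))" using D by (rule mult_left_mono)
            then show ?thesis unfolding K_def by (simp add: mult_ac)
          qed
          then have "K * \<bar>f t\<bar> \<le> D * 2 powr (e + 1) / L * m t * \<bar>f t\<bar>"
            by (rule mult_right_mono) simp
          then have "ennreal (K * \<bar>f t\<bar>) \<le> ennreal (D * 2 powr (e + 1) / L * (\<bar>f t\<bar> * m t))"
            by (intro ennreal_leI) (simp add: mult_ac)
          then show ?thesis using True tp K0 D L m0[of t]
            by (simp add: ennreal_mult[symmetric] mult_ac)
        qed simp
      qed
    qed
    also have "\<dots> = ennreal (D * 2 powr (e + 1) / L) * (\<integral>\<^sup>+t. ennreal (indicator {0<..} t * \<bar>f t\<bar> * m t) \<partial>lborel)"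
      by (subst nn_integral_cmult) auto
    finally show ?thesis .
  qed
  also have "ennreal (K * a) * \<Phi> \<le> ennreal (D * 2 powr e) * (\<integral>\<^sup>+s. ennreal (g s * (a + s) powr (-e)) * indicator {0..} s \<partial>lborel)"
  proof -
    have "ennreal (K * a) * \<Phi> = (\<integral>\<^sup>+s. ennreal (K * a) * (ennreal (g s) * indicator {0..a} s) \<partial>lborel)"
      unfolding \<Phi>_def by (subst nn_integral_cmult) auto
    also have "\<dots> \<le> (\<integral>\<^sup>+s. ennreal (D * 2 powr e) * (ennreal (g s * (a + s) powr (-e)) * indicator {0..} s) \<partial>lborel)"
    proof (intro nn_integral_mono)
      fix s :: real
      show "ennreal (K * a) * (ennreal (g s) * indicator {0..a} s) \<le> ennreal (D * 2 powr e) * (ennreal (g s * (a + s) powr (-e)) * indicator {0..} s)"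
      proof (cases "0 \<le> s \<and> s \<le> a")
        case True
        have "K * a = D * a powr (-e)"
          using powr_m1_mult[OF a0, of "-e"] by (simp add: K_def mult.assoc)
        also have "a powr (-e) \<le> 2 powr e * (a + s) powr (-e)"
        proof -
          have "(2 * a) powr (-e) \<le> (a + s) powr (-e)"
            using True a0 e by (intro powr_mono2') auto
          moreover have "(2 * a) powr (-e) = 2 powr (-e) * a powr (-e)" using a0 by (simp add: powr_mult)
          ultimately have "2 powr (-e) * a powr (-e) \<le> (a + s) powr (-e)" by simp
          then have "2 powr e * (2 powr (-e) * a powr (-e)) \<le> 2 powr e * (a + s) powr (-e)"
            by (intro mult_left_mono) auto
          moreover have "2 powr e * (2 powr (-e) * a powr (-e)) = a powr (-e)"
            by (simp only: mult.assoc[symmetric] powr_add[symmetric]) simp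
          ultimately show ?thesis by simp
        qed
        finally have "K * a \<le> D * (2 powr e * (a + s) powr (-e))" using D by (simp add: mult_left_mono)
        then have "K * a * g s \<le> D * (2 powr e * (a + s) powr (-e)) * g s"
          using g0[of s] by (rule mult_right_mono)
        then have "ennreal (K * a * g s) \<le> ennreal (D * 2 powr e * (g s * (a + s) powr (-e)))"
          by (intro ennreal_leI) (simp add: mult_ac)
        then show ?thesis using True g0[of s] K0 a0 D
          by (simp add: ennreal_mult[symmetric] mult_ac)
      qed simp
    qed
    also have "\<dots> = ennreal (D * 2 powr e) * (\<integral>\<^sup>+s. ennreal (g s * (a + s) powr (-e)) * indicator {0..} s \<partial>lborel)"
      by (subst nn_integral_cmult) auto
    finally show ?thesis .
  qed
  finally show ?thesis by (simp add: add_mono)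
qed

context
  fixes u :: "('a::euclidean_space \<times> real) \<Rightarrow> real"
  assumes sm: "smooth_fun u"
begin

lemma sm_diff: "u differentiable (at x)"
proof -
  have "\<forall>vs x. dderiv vs u differentiable (at x)" using sm unfolding smooth_fun_def .
  then have "dderiv [] u differentiable (at x)" by (rule allE[where x="[]"]) (rule spec)
  then show ?thesis by simp
qed

lemma sm_deriv_cont: "continuous_on UNIV (\<lambda>x. frechet_derivative u (at x) v)"
proof -
  have "(\<lambda>x. frechet_derivative u (at x) v) differentiable (at x)" for x
  proof -
    have "\<forall>vs x. dderiv vs u differentiable (at x)" using sm unfolding smooth_fun_def .
    then have "dderiv [v] u differentiable (at x)" by (rule allE[where x="[v]"]) (rule spec)
    then show ?thesis by simp
  qed
  then show ?thesis
    by (intro continuous_at_imp_continuous_on) (auto intro: differentiable_imp_continuous_within)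
qed

lemma sm_cont: "continuous_on UNIV u"
  by (intro continuous_at_imp_continuous_on) (auto intro: differentiable_imp_continuous_within sm_diff)

lemma sm_grad_cont: "continuous_on UNIV (grad_norm u)"
proof -
  have "continuous_on UNIV (\<lambda>x. (\<Sum>b\<in>Basis. (frechet_derivative u (at x) b)\<^sup>2))"
    by (intro continuous_on_sum continuous_on_power sm_deriv_cont)
  then show ?thesis unfolding grad_norm_def[abs_def]
    by (rule continuous_on_compose2[OF continuous_on_real_sqrt]) auto
qed

lemma sm_vert: "((\<lambda>t. u (x', t)) has_real_derivative frechet_derivative u (at (x', t)) (0, 1)) (at t)"
proof -
  have d: "(u has_derivative frechet_derivative u (at (x', t))) (at (x', t))"
    using sm_diff frechet_derivative_works by blast
  have l: "linear (frechet_derivative u (at (x', t)))"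
    using d has_derivative_linear by blast
  have p: "((\<lambda>t. (x', t)) has_derivative (\<lambda>h. (0, h))) (at t)"
    by (intro has_derivative_Pair has_derivative_const has_derivative_ident)
  have "((\<lambda>t. u (x', t)) has_derivative (\<lambda>h. frechet_derivative u (at (x', t)) (0, h))) (at t)"
    using has_derivative_compose[of "\<lambda>t. (x', t)" "\<lambda>h. (0, h)" t UNIV u "frechet_derivative u (at (x', t))", OF p] d by simp
  moreover have "(\<lambda>h. frechet_derivative u (at (x', t)) (0, h)) = (*) (frechet_derivative u (at (x', t)) (0, 1))"
  proof
    fix h :: real
    have e: "(0::'a, h) = h *\<^sub>R (0, 1)" by simp
    have "frechet_derivative u (at (x', t)) (h *\<^sub>R (0, 1)) = h *\<^sub>R frechet_derivative u (at (x', t)) (0, 1)"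
      by (rule linear_scale[OF l])
    then show "frechet_derivative u (at (x', t)) (0, h) = frechet_derivative u (at (x', t)) (0, 1) * h"
      unfolding e[symmetric] by simp
  qed
  ultimately show ?thesis
    unfolding has_field_derivative_def by simp
qed

lemma sm_vert_le: "\<bar>frechet_derivative u (at p) (0, 1)\<bar> \<le> grad_norm u p"
proof -
  have b: "(0::'a, 1::real) \<in> Basis" by (simp add: Basis_prod_def)
  have "(frechet_derivative u (at p) (0, 1))\<^sup>2 \<le> (\<Sum>b\<in>Basis. (frechet_derivative u (at p) b)\<^sup>2)"
    by (rule member_le_sum[OF b]) auto
  then have "sqrt ((frechet_derivative u (at p) (0, 1))\<^sup>2) \<le> sqrt (\<Sum>b\<in>Basis. (frechet_derivative u (at p) b)\<^sup>2)"
    by (rule real_sqrt_le_mono)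
  then show ?thesis unfolding grad_norm_def by simp
qed

lemma sm_grad_zero:
  assumes "p \<notin> closure {x. u x \<noteq> 0}"
  shows "grad_norm u p = 0"
proof -
  let ?S = "- closure {x. u x \<noteq> 0}"
  have "((\<lambda>_. 0) has_derivative (\<lambda>_. 0)) (at p)" by simp
  moreover have "open ?S" by (intro open_Compl closed_closure)
  moreover have "p \<in> ?S" using assms by simp
  moreover have "\<And>x. x \<in> ?S \<Longrightarrow> 0 = u x" using closure_subset[of "{x. u x \<noteq> 0}"] by auto
  ultimately have "(u has_derivative (\<lambda>_. 0)) (at p)"
    by (rule has_derivative_transform_within_open)
  then have "frechet_derivative u (at p) = (\<lambda>_. 0)" by (rule frechet_derivative_at[symmetric])
  then show ?thesis by (simp add: grad_norm_def)
qed

lemma sm_zero: "p \<notin> closure {x. u x \<noteq> 0} \<Longrightarrow> u p = 0"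
  using closure_subset[of "{x. u x \<noteq> 0}"] by blast

lemma sm_vert_cont: "continuous_on UNIV (\<lambda>s. frechet_derivative u (at (x', s)) (0, 1))"
  by (rule continuous_on_compose2[OF sm_deriv_cont]) (auto intro!: continuous_intros)

lemma sm_ftc:
  assumes t: "0 \<le> t"
  shows "ennreal \<bar>u (x', t) - u (x', 0)\<bar> \<le> (\<integral>\<^sup>+s. ennreal (grad_norm u (x', s)) * indicator {0..t} s \<partial>lborel)"
proof -
  let ?D = "\<lambda>s. frechet_derivative u (at (x', s)) (0, 1)"
  have cD: "continuous_on {0..t} ?D" using sm_vert_cont continuous_on_subset by blast
  have "integral\<^sup>L lborel (\<lambda>s. indicator {0..t} s *\<^sub>R ?D s) = u (x', t) - u (x', 0)"
  proof (rule integral_FTC_atLeastAtMost[OF t])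
    fix s assume "0 \<le> s" "s \<le> t"
    show "((\<lambda>s. u (x', s)) has_vector_derivative ?D s) (at s within {0..t})"
      using sm_vert[of x' s] by (simp add: has_real_derivative_iff_has_vector_derivative has_vector_derivative_at_within)
  qed (rule cD)
  moreover have int: "integrable lborel (\<lambda>s. indicator {0..t} s *\<^sub>R ?D s)"
    by (rule borel_integrable_compact[OF compact_Icc cD])
  ultimately have "\<bar>u (x', t) - u (x', 0)\<bar> \<le> integral\<^sup>L lborel (\<lambda>s. norm (indicator {0..t} s *\<^sub>R ?D s))"
    using integral_norm_bound[of lborel "\<lambda>s. indicator {0..t} s *\<^sub>R ?D s"] by simp
  then have "ennreal \<bar>u (x', t) - u (x', 0)\<bar> \<le> ennreal (integral\<^sup>L lborel (\<lambda>s. norm (indicator {0..t} s *\<^sub>R ?D s)))"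
    by (rule ennreal_leI)
  also have "\<dots> = (\<integral>\<^sup>+s. ennreal (norm (indicator {0..t} s *\<^sub>R ?D s)) \<partial>lborel)"
    by (rule nn_integral_eq_integral[symmetric]) (use int in auto)
  also have "\<dots> \<le> (\<integral>\<^sup>+s. ennreal (grad_norm u (x', s)) * indicator {0..t} s \<partial>lborel)"
    by (intro nn_integral_mono) (auto split: split_indicator intro!: ennreal_leI sm_vert_le)
  finally show ?thesis .
qed

end

lemma sphere_area_pos: "sphere_area k > 0"
  unfolding sphere_area_def by (intro divide_pos_pos mult_pos_pos Gamma_real_pos) auto

lemma sq_powr2:
  fixes y e :: real assumes "y > 0" shows "(y\<^sup>2) powr (e / 2) = y powr e"
proof -
  have "y\<^sup>2 = y powr 2" using powr_realpow[of y 2] assms by simp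
  then have "(y\<^sup>2) powr (e / 2) = y powr (2 * (e / 2))" by (simp add: powr_powr)
  then show ?thesis by simp
qed

lemma sq_ineq1: fixes x y :: real shows "(x + y)\<^sup>2 \<le> 2 * (x\<^sup>2 + y\<^sup>2)"
proof -
  have "0 \<le> (x - y)\<^sup>2" by simp
  then show ?thesis by (simp add: power2_eq_square algebra_simps)
qed

lemma mu_int_upper:
  fixes x' :: "real^'m" assumes t: "t \<ge> 0"
  shows "mu_int n (x', t) \<le> 2 / sphere_area n * 2 powr ((real n + 1) / 2) * (1 + norm x' + t) powr (-(real n + 1))"
proof -
  define a where "a = 1 + norm x'"
  have a1: "a \<ge> 1" by (simp add: a_def)
  define X where "X = (1 + t)\<^sup>2 + (norm x')\<^sup>2"
  have XY: "X \<ge> (a + t)\<^sup>2 / 2"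
    unfolding X_def a_def using sq_ineq1[of "1 + t" "norm x'"] by (simp add: algebra_simps)
  have Ypos: "(a + t)\<^sup>2 / 2 > 0" using a1 t by simp
  have "((a + t)\<^sup>2 / 2) powr ((real n + 1) / 2) \<le> X powr ((real n + 1) / 2)"
    using XY Ypos by (intro powr_mono2) auto
  moreover have "((a + t)\<^sup>2 / 2) powr ((real n + 1) / 2) = (a + t) powr (real n + 1) / 2 powr ((real n + 1) / 2)"
    using a1 t by (simp add: powr_divide sq_powr2)
  ultimately have le: "(a + t) powr (real n + 1) / 2 powr ((real n + 1) / 2) \<le> X powr ((real n + 1) / 2)" by simp
  have pos: "(a + t) powr (real n + 1) / 2 powr ((real n + 1) / 2) > 0" using a1 t by simp
  have "mu_int n (x', t) = 2 / (sphere_area n * X powr ((real n + 1) / 2))"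
    unfolding mu_int_def X_def by (simp add: add.commute)
  also have "\<dots> \<le> 2 / (sphere_area n * ((a + t) powr (real n + 1) / 2 powr ((real n + 1) / 2)))"
    using le pos sphere_area_pos[of n] by (intro divide_left_mono mult_left_mono mult_pos_pos) auto
  also have "\<dots> = 2 / sphere_area n * 2 powr ((real n + 1) / 2) * (a + t) powr (-(real n + 1))"
    by (simp only: powr_minus_divide) simp
  finally show ?thesis by (simp add: a_def)
qed

lemma mu_int_lower:
  fixes x' :: "real^'m" assumes t: "t \<ge> 0" "t \<le> 1 + norm x'"
  shows "mu_int n (x', t) \<ge> 2 / sphere_area n * (2 * (1 + norm x')) powr (-(real n + 1))"
proof -
  define a where "a = 1 + norm x'"
  have a1: "a \<ge> 1" by (simp add: a_def)
  define X where "X = (1 + t)\<^sup>2 + (norm x')\<^sup>2"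
  have X0: "X > 0" unfolding X_def using t by (simp add: add_pos_nonneg)
  have XY: "X \<le> (2 * a)\<^sup>2"
  proof -
    have "(1 + t)\<^sup>2 + (norm x')\<^sup>2 \<le> (1 + t + norm x')\<^sup>2"
      using t by (simp add: power2_eq_square algebra_simps)
    also have "\<dots> \<le> (2 * a)\<^sup>2"
      using t by (intro power_mono) (auto simp: a_def)
    finally show ?thesis by (simp add: X_def)
  qed
  have "X powr ((real n + 1) / 2) \<le> ((2 * a)\<^sup>2) powr ((real n + 1) / 2)"
    using XY X0 by (intro powr_mono2) auto
  also have "\<dots> = (2 * a) powr (real n + 1)" using a1 by (subst sq_powr2) auto
  finally have le: "X powr ((real n + 1) / 2) \<le> (2 * a) powr (real n + 1)" .
  have "2 / sphere_area n * (2 * a) powr (-(real n + 1)) = 2 / (sphere_area n * (2 * a) powr (real n + 1))"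
    by (simp only: powr_minus_divide) simp
  also have "\<dots> \<le> 2 / (sphere_area n * X powr ((real n + 1) / 2))"
    using le X0 sphere_area_pos[of n] by (intro divide_left_mono mult_left_mono mult_pos_pos) auto
  also have "\<dots> = mu_int n (x', t)"
    unfolding mu_int_def X_def by (simp add: add.commute)
  finally show ?thesis by (simp add: a_def)
qed

lemma mu_bdry_upper:
  fixes x' :: "real^'m"
  shows "mu_bdry n x' \<le> 2 / sphere_area (n - 1) * 2 powr (real n / 2) * (1 + norm x') powr (-real n)"
proof -
  define a where "a = 1 + norm x'"
  have a1: "a \<ge> 1" by (simp add: a_def)
  define X where "X = 1 + (norm x')\<^sup>2"
  have XY: "X \<ge> a\<^sup>2 / 2"
    unfolding X_def a_def using sq_ineq1[of "1" "norm x'"] by (simp add: algebra_simps)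
  have Ypos: "a\<^sup>2 / 2 > 0" using a1 by simp
  have "(a\<^sup>2 / 2) powr (real n / 2) \<le> X powr (real n / 2)"
    using XY Ypos by (intro powr_mono2) auto
  moreover have "(a\<^sup>2 / 2) powr (real n / 2) = a powr (real n) / 2 powr (real n / 2)"
    using a1 by (simp add: powr_divide sq_powr2)
  ultimately have le: "a powr (real n) / 2 powr (real n / 2) \<le> X powr (real n / 2)" by simp
  have pos: "a powr (real n) / 2 powr (real n / 2) > 0" using a1 by simp
  have "mu_bdry n x' = 2 / (sphere_area (n - 1) * X powr (real n / 2))"
    by (simp add: mu_bdry_def X_def)
  also have "\<dots> \<le> 2 / (sphere_area (n - 1) * (a powr (real n) / 2 powr (real n / 2)))"
    using le pos sphere_area_pos[of "n - 1"] by (intro divide_left_mono mult_left_mono mult_pos_pos) auto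
  also have "\<dots> = 2 / sphere_area (n - 1) * 2 powr (real n / 2) * a powr (-real n)"
    using a1 by (simp add: powr_minus field_simps)
  finally show ?thesis by (simp add: a_def)
qed

lemma mu_bdry_lower:
  fixes x' :: "real^'m"
  shows "mu_bdry n x' \<ge> 2 / sphere_area (n - 1) * (1 + norm x') powr (-real n)"
proof -
  define a where "a = 1 + norm x'"
  have a1: "a \<ge> 1" by (simp add: a_def)
  define X where "X = 1 + (norm x')\<^sup>2"
  have X0: "X > 0" unfolding X_def by (simp add: add_pos_nonneg)
  have XY: "X \<le> a\<^sup>2"
    unfolding X_def a_def by (simp add: power2_eq_square field_simps)
  have "X powr (real n / 2) \<le> (a\<^sup>2) powr (real n / 2)"
    using XY X0 by (intro powr_mono2) auto
  also have "\<dots> = a powr (real n)" using a1 by (subst sq_powr2) auto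
  finally have le: "X powr (real n / 2) \<le> a powr (real n)" .
  have "2 / sphere_area (n - 1) * a powr (-real n) = 2 / (sphere_area (n - 1) * a powr (real n))"
    using a1 by (simp add: powr_minus field_simps)
  also have "\<dots> \<le> 2 / (sphere_area (n - 1) * X powr (real n / 2))"
    using le X0 sphere_area_pos[of "n - 1"] by (intro divide_left_mono mult_left_mono mult_pos_pos) auto
  also have "\<dots> = mu_bdry n x'"
    by (simp add: mu_bdry_def X_def)
  finally show ?thesis by (simp add: a_def)
qed

lemma upper_half_eq: "upper_half = {p. 0 < snd p}"
  by (auto simp: upper_half_def)

lemma upper_half_meas[measurable]: "upper_half \<in> sets (borel :: ((real^'m) \<times> real) measure)"
proof -
  have "open {p :: (real^'m) \<times> real. 0 < snd p}"
    by (intro open_Collect_less continuous_intros)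
  then show ?thesis unfolding upper_half_eq by (rule borel_open)
qed

lemma fst_meas: "fst \<in> borel_measurable (borel :: ((real^'m) \<times> real) measure)"
  by (rule borel_measurable_continuous_onI) (intro continuous_intros)

lemma snd_meas: "snd \<in> borel_measurable (borel :: ((real^'m) \<times> real) measure)"
  by (rule borel_measurable_continuous_onI) (intro continuous_intros)

lemma mu_int_meas[measurable]: "mu_int n \<in> borel_measurable (borel :: ((real^'m) \<times> real) measure)"
proof -
  note [measurable] = fst_meas snd_meas
  show ?thesis unfolding mu_int_def[abs_def] by measurable
qed

lemma mu_bdry_meas[measurable]: "mu_bdry n \<in> borel_measurable borel"
  unfolding mu_bdry_def[abs_def] by measurable

lemma mu_int_le: "snd p \<ge> 0 \<Longrightarrow> mu_int n p \<le> 2 / sphere_area n"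
proof -
  assume t: "snd p \<ge> 0"
  have X: "(1 + snd p)\<^sup>2 + (norm (fst p))\<^sup>2 \<ge> 1"
    using t by (smt (verit) one_le_power zero_le_power2)
  then have "((1 + snd p)\<^sup>2 + (norm (fst p))\<^sup>2) powr (real (n + 1) / 2) \<ge> 1"
    by (intro ge_one_powr_ge_zero) auto
  then show ?thesis unfolding mu_int_def using sphere_area_pos[of n]
    by (intro divide_left_mono mult_pos_pos) (auto simp: mult_le_cancel_left1)
qed

lemma mu_int_nonneg: "mu_int n p \<ge> 0"
  unfolding mu_int_def using sphere_area_pos[of n] by simp

lemma mu_bdry_le: "mu_bdry n x \<le> 2 / sphere_area (n - 1)"
proof -
  have "(1 + (norm x)\<^sup>2) powr (real n / 2) \<ge> 1"
    by (intro ge_one_powr_ge_zero) auto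
  then show ?thesis unfolding mu_bdry_def using sphere_area_pos[of "n - 1"]
    by (intro divide_left_mono mult_pos_pos) (auto simp: mult_le_cancel_left1)
qed

lemma mu_bdry_nonneg: "mu_bdry n x \<ge> 0"
  unfolding mu_bdry_def using sphere_area_pos[of "n - 1"] by simp

context
  fixes u :: "((real^'m) \<times> real) \<Rightarrow> real"
  assumes sm: "smooth_fun u" and cpt: "compact (closure {x. u x \<noteq> 0})"
begin

lemma u_meas[measurable]: "u \<in> borel_measurable borel"
  by (rule borel_measurable_continuous_onI[OF sm_cont[OF sm]])

lemma grad_meas[measurable]: "grad_norm u \<in> borel_measurable borel"
  by (rule borel_measurable_continuous_onI[OF sm_grad_cont[OF sm]])

lemma int_abs_u: "integrable lborel (\<lambda>p. \<bar>u p\<bar>)"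
proof -
  let ?S = "closure {x. u x \<noteq> 0}"
  have "integrable lborel (\<lambda>p. indicator ?S p *\<^sub>R \<bar>u p\<bar>)"
    by (rule borel_integrable_compact[OF cpt]) (intro continuous_intros continuous_on_subset[OF sm_cont[OF sm]], auto)
  moreover have "(\<lambda>p. indicator ?S p *\<^sub>R \<bar>u p\<bar>) = (\<lambda>p. \<bar>u p\<bar>)"
  proof
    fix p show "indicator ?S p *\<^sub>R \<bar>u p\<bar> = \<bar>u p\<bar>"
    proof (cases "p \<in> ?S")
      case False
      have "u p = 0" by (rule sm_zero[OF sm False])
      then show ?thesis by simp
    qed simp
  qed
  ultimately show ?thesis by simp
qed

lemma int_grad_pow: assumes k: "k > 0" shows "integrable lborel (\<lambda>p. grad_norm u p ^ k)"
proof -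
  let ?S = "closure {x. u x \<noteq> 0}"
  have "integrable lborel (\<lambda>p. indicator ?S p *\<^sub>R grad_norm u p ^ k)"
    by (rule borel_integrable_compact[OF cpt]) (intro continuous_intros continuous_on_subset[OF sm_grad_cont[OF sm]], auto)
  moreover have "(\<lambda>p. indicator ?S p *\<^sub>R grad_norm u p ^ k) = (\<lambda>p. grad_norm u p ^ k)"
  proof
    fix p show "indicator ?S p *\<^sub>R grad_norm u p ^ k = grad_norm u p ^ k"
    proof (cases "p \<in> ?S")
      case False
      have "grad_norm u p = 0" by (rule sm_grad_zero[OF sm False])
      then show ?thesis using k by simp
    qed simp
  qed
  ultimately show ?thesis by simp
qed

lemma int_I: "integrable lborel (\<lambda>p. indicator upper_half p * \<bar>u p\<bar> * mu_int n p)"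
proof (rule Bochner_Integration.integrable_bound)
  show "integrable lborel (\<lambda>p. 2 / sphere_area n * \<bar>u p\<bar>)"
    using int_abs_u by simp
  show "(\<lambda>p. indicator upper_half p * \<bar>u p\<bar> * mu_int n p) \<in> borel_measurable lborel" by measurable
  show "AE p in lborel. norm (indicator upper_half p * \<bar>u p\<bar> * mu_int n p) \<le> norm (2 / sphere_area n * \<bar>u p\<bar>)"
  proof (intro AE_I2)
    fix p :: "(real^'m) \<times> real"
    show "norm (indicator upper_half p * \<bar>u p\<bar> * mu_int n p) \<le> norm (2 / sphere_area n * \<bar>u p\<bar>)"
    proof (cases "p \<in> upper_half")
      case True
      then have "mu_int n p \<le> 2 / sphere_area n" by (intro mu_int_le) (auto simp: upper_half_eq)
      then have le: "\<bar>u p\<bar> * mu_int n p \<le> \<bar>u p\<bar> * (2 / sphere_area n)" by (rule mult_left_mono) simp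
      have "norm (indicator upper_half p * \<bar>u p\<bar> * mu_int n p) = \<bar>u p\<bar> * mu_int n p"
        using True mu_int_nonneg[of n p] by simp
      also note le
      also have "\<bar>u p\<bar> * (2 / sphere_area n) = norm (2 / sphere_area n * \<bar>u p\<bar>)"
        using sphere_area_pos[of n] by (simp add: abs_mult mult.commute)
      finally show ?thesis .
    qed simp
  qed
qed

lemma int_G: assumes k: "k > 0" shows "integrable lborel (\<lambda>p. indicator upper_half p * grad_norm u p ^ k)"
proof (rule Bochner_Integration.integrable_bound)
  show "integrable lborel (\<lambda>p. grad_norm u p ^ k)" by (rule int_grad_pow[OF k])
  show "(\<lambda>p. indicator upper_half p * grad_norm u p ^ k) \<in> borel_measurable lborel" by measurable
  show "AE p in lborel. norm (indicator upper_half p * grad_norm u p ^ k) \<le> norm (grad_norm u p ^ k)"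
  proof (intro AE_I2)
    fix p :: "(real^'m) \<times> real"
    show "norm (indicator upper_half p * grad_norm u p ^ k) \<le> norm (grad_norm u p ^ k)"
      by (cases "p \<in> upper_half") simp_all
  qed
qed

lemma int_B: "integrable lborel (\<lambda>x'. \<bar>u (x', 0)\<bar> * mu_bdry n x')"
proof -
  let ?S = "closure {x. u x \<noteq> 0}"
  let ?K = "fst ` ?S"
  have cK: "compact ?K" by (intro compact_continuous_image continuous_intros cpt)
  have cu: "continuous_on UNIV (\<lambda>x'::real^'m. u (x', 0))"
    by (rule continuous_on_compose2[OF sm_cont[OF sm]]) (auto intro!: continuous_intros)
  have "integrable lborel (\<lambda>x'. indicator ?K x' *\<^sub>R \<bar>u (x', 0)\<bar>)"
    by (rule borel_integrable_compact[OF cK]) (intro continuous_intros continuous_on_subset[OF cu], auto)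
  moreover have "(\<lambda>x'. indicator ?K x' *\<^sub>R \<bar>u (x', 0)\<bar>) = (\<lambda>x'. \<bar>u (x', 0)\<bar>)"
  proof
    fix x' :: "real^'m"
    show "indicator ?K x' *\<^sub>R \<bar>u (x', 0)\<bar> = \<bar>u (x', 0)\<bar>"
    proof (cases "x' \<in> ?K")
      case False
      then have "(x', 0) \<notin> ?S" by (metis fst_conv image_eqI)
      have "u (x', 0) = 0" by (rule sm_zero[OF sm \<open>(x', 0) \<notin> ?S\<close>])
      then show ?thesis by simp
    qed simp
  qed
  ultimately have iu: "integrable lborel (\<lambda>x'. \<bar>u (x', 0)\<bar>)" by simp
  show ?thesis
  proof (rule Bochner_Integration.integrable_bound)
    show "integrable lborel (\<lambda>x'. 2 / sphere_area (n - 1) * \<bar>u (x', 0)\<bar>)" using iu by simp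
    have [measurable]: "(\<lambda>x'::real^'m. u (x', 0)) \<in> borel_measurable borel"
      by (rule borel_measurable_continuous_onI[OF cu])
    show "(\<lambda>x'. \<bar>u (x', 0)\<bar> * mu_bdry n x') \<in> borel_measurable lborel" by measurable
    show "AE x' in lborel. norm (\<bar>u (x', 0)\<bar> * mu_bdry n x') \<le> norm (2 / sphere_area (n - 1) * \<bar>u (x', 0)\<bar>)"
    proof (intro AE_I2)
      fix x' :: "real^'m"
      have "\<bar>u (x', 0)\<bar> * mu_bdry n x' \<le> \<bar>u (x', 0)\<bar> * (2 / sphere_area (n - 1))"
        by (rule mult_left_mono[OF mu_bdry_le]) simp
      then show "norm (\<bar>u (x', 0)\<bar> * mu_bdry n x') \<le> norm (2 / sphere_area (n - 1) * \<bar>u (x', 0)\<bar>)"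
        using mu_bdry_nonneg[of n x'] sphere_area_pos[of "n - 1"] by (simp add: abs_mult mult_ac)
    qed
  qed
qed

end

lemma nn_fst_lborel:
  fixes f :: "('a::euclidean_space \<times> 'b::euclidean_space) \<Rightarrow> ennreal"
  assumes "f \<in> borel_measurable borel"
  shows "(\<integral>\<^sup>+x. \<integral>\<^sup>+y. f (x, y) \<partial>lborel \<partial>lborel) = (\<integral>\<^sup>+p. f p \<partial>lborel)"
proof -
  have "f \<in> borel_measurable (lborel \<Otimes>\<^sub>M lborel)" using assms by (simp add: lborel_prod)
  from lborel.nn_integral_fst[OF this] show ?thesis by (simp add: lborel_prod)
qed

lemma dim_vec: "DIM(real^'m) = CARD('m)" by simp

lemma grad_norm_nonneg: "grad_norm f p \<ge> 0"
  unfolding grad_norm_def by (intro real_sqrt_ge_zero sum_nonneg) simp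

definition Aconst :: "nat \<Rightarrow> nat \<Rightarrow> real" where
  "Aconst n d = (2 / (real n / d - 1)) ^ d / (real n * (real n / (real n - 1)) - 1)"

lemma Aconst_nonneg: "n = d + 1 \<Longrightarrow> d \<ge> 1 \<Longrightarrow> Aconst n d \<ge> 0"
proof -
  assume n: "n = d + 1" and d: "d \<ge> 1"
  have "real n / d > 1" using n d by (simp add: field_simps)
  moreover have "real n * (real n / (real n - 1)) > 1"
  proof -
    have "real n / (real n - 1) \<ge> 1" using n d by (simp add: field_simps)
    then have "real n * (real n / (real n - 1)) \<ge> real n * 1" by (intro mult_left_mono) auto
    moreover have "real n \<ge> 2" using n d by simp
    ultimately show ?thesis by linarith
  qed
  ultimately show ?thesis unfolding Aconst_def by simp
qed

context
  fixes u :: "((real^'m) \<times> real) \<Rightarrow> real" and n :: nat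
  assumes sm: "smooth_fun u" and cpt: "compact (closure {x. u x \<noteq> 0})" and n: "n = CARD('m) + 1"
begin

lemma holder_step:
  "(\<integral>\<^sup>+x'. \<integral>\<^sup>+s. ennreal (grad_norm u (x', s) * (1 + norm x' + s) powr (-real n)) * indicator {0..} s \<partial>lborel \<partial>lborel)
   \<le> ennreal ((LINT p|lborel. indicator upper_half p * grad_norm u p ^ n) powr (1 / real n)
        * (1 / real n + Aconst n CARD('m) / (real n / (real n - 1))))"
proof -
  note [measurable] = fst_meas snd_meas u_meas[OF sm cpt] grad_meas[OF sm cpt]
  define e where "e = real n"
  define q where "q = e / (e - 1)"
  have e1: "e > 1" using n by (simp add: e_def)
  have q1: "q > 1" using e1 by (simp add: q_def field_simps)
  have eq: "1 / e + 1 / q = 1" using e1 by (simp add: q_def field_simps)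
  define G where "G p = indicator upper_half p * grad_norm u p" for p :: "(real^'m) \<times> real"
  define w where "w p = indicator upper_half p * (1 + norm (fst p) + snd p) powr (-e)" for p :: "(real^'m) \<times> real"
  define E where "E = (LINT p|lborel. indicator upper_half p * grad_norm u p ^ n)"
  have Gm[measurable]: "G \<in> borel_measurable borel" unfolding G_def[abs_def] by measurable
  have wm[measurable]: "w \<in> borel_measurable borel" unfolding w_def[abs_def] by measurable
  have G0: "G p \<ge> 0" for p unfolding G_def using grad_norm_nonneg[of u p] by simp
  have w0: "w p \<ge> 0" for p unfolding w_def by simp
  have E0: "E \<ge> 0" unfolding E_def using grad_norm_nonneg[of u] by (intro integral_nonneg_AE AE_I2) simp
  have GE: "(\<integral>\<^sup>+p. ennreal (G p powr e) \<partial>lborel) = ennreal E"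
  proof -
    have "G p powr e = indicator upper_half p * grad_norm u p ^ n" for p
    proof (cases "p \<in> upper_half \<and> grad_norm u p > 0")
      case True
      then show ?thesis unfolding G_def e_def by (simp add: powr_realpow)
    next
      case False
      moreover have "grad_norm u p \<ge> 0" by (rule grad_norm_nonneg)
      ultimately have "G p = 0 \<and> indicator upper_half p * grad_norm u p ^ n = (0::real)"
        using n unfolding G_def by (auto simp: indicator_def)
      then show ?thesis by simp
    qed
    then have "(\<integral>\<^sup>+p. ennreal (G p powr e) \<partial>lborel) = (\<integral>\<^sup>+p. ennreal (indicator upper_half p * grad_norm u p ^ n) \<partial>lborel)"
      by simp
    also have "\<dots> = ennreal E" unfolding E_def
      by (rule nn_integral_eq_integral) (use int_G[OF sm cpt, of n] n grad_norm_nonneg[of u] in auto)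
    finally show ?thesis .
  qed
  have wA: "(\<integral>\<^sup>+p. ennreal (w p powr q) \<partial>lborel) \<le> ennreal (Aconst n CARD('m))"
  proof -
    have wq: "w p powr q = indicator upper_half p * (1 + norm (fst p) + snd p) powr (-(e * q))" for p
    proof (cases "p \<in> upper_half")
      case True
      then have "1 + norm (fst p) + snd p > 0" by (simp add: upper_half_eq add_pos_nonneg)
      then show ?thesis using True unfolding w_def by (simp add: powr_powr)
    qed (simp add: w_def)
    have "(\<integral>\<^sup>+p. ennreal (w p powr q) \<partial>lborel) = (\<integral>\<^sup>+x'. \<integral>\<^sup>+s. ennreal (w (x', s) powr q) \<partial>lborel \<partial>lborel)"
      by (rule nn_fst_lborel[symmetric]) measurable
    also have "\<dots> \<le> (\<integral>\<^sup>+x'. \<integral>\<^sup>+s. ennreal ((1 + norm (x'::real^'m) + s) powr (-(real n * (real n / (real n - 1))))) * indicator {0..} s \<partial>lborel \<partial>lborel)"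
    proof (intro nn_integral_mono)
      fix x' :: "real^'m" and s :: real
      show "ennreal (w (x', s) powr q) \<le> ennreal ((1 + norm x' + s) powr (-(real n * (real n / (real n - 1))))) * indicator {0..} s"
        unfolding wq[of "(x', s)"] by (cases "0 < s") (auto simp: upper_half_eq e_def q_def)
    qed
    also have "\<dots> \<le> ennreal (Aconst n CARD('m))"
      using weight_int[of n, where 'a="real^'m"] n unfolding Aconst_def by simp
    finally show ?thesis .
  qed
  have A0: "Aconst n CARD('m) \<ge> 0" using n by (intro Aconst_nonneg) auto
  have "(\<integral>\<^sup>+x'. \<integral>\<^sup>+s. ennreal (grad_norm u (x', s) * (1 + norm x' + s) powr (-real n)) * indicator {0..} s \<partial>lborel \<partial>lborel)
      = (\<integral>\<^sup>+x'. \<integral>\<^sup>+s. ennreal (G (x', s) * w (x', s)) \<partial>lborel \<partial>lborel)"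
  proof (rule nn_integral_cong, rule nn_integral_cong_AE)
    fix x' :: "real^'m"
    show "AE s in lborel. ennreal (grad_norm u (x', s) * (1 + norm x' + s) powr (-real n)) * indicator {0..} s
        = ennreal (G (x', s) * w (x', s))"
      using AE_lborel_singleton[of 0]
      by eventually_elim (auto simp: G_def w_def upper_half_eq e_def split: split_indicator)
  qed
  also have "\<dots> = (\<integral>\<^sup>+p. ennreal (G p * w p) \<partial>lborel)"
    by (rule nn_fst_lborel) measurable
  also have "\<dots> \<le> ennreal (E powr (1 / e) * (1 / e + Aconst n CARD('m) / q))"
  proof -
    have 1: "G \<in> borel_measurable lborel" using Gm by (simp only: measurable_lborel2)
    have 2: "w \<in> borel_measurable lborel" using wm by (simp only: measurable_lborel2)
    show ?thesis using holder_nn[of e q G lborel w E "Aconst n CARD('m)", OF e1 q1 eq 1 2 G0 w0 GE E0 wA A0] .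
  qed
  finally show ?thesis by (simp add: E_def e_def q_def)
qed


lemma u0_meas[measurable]: "(\<lambda>x'::real^'m. u (x', 0)) \<in> borel_measurable borel"
proof -
  have "continuous_on UNIV (\<lambda>x'::real^'m. u (x', 0))"
    by (rule continuous_on_compose2[OF sm_cont[OF sm]]) (auto intro!: continuous_intros)
  then show ?thesis by (rule borel_measurable_continuous_onI)
qed

lemma ux_meas[measurable]: "(\<lambda>t. u (x', t)) \<in> borel_measurable borel"
proof -
  have "continuous_on UNIV (\<lambda>t. u (x', t))"
    by (rule continuous_on_compose2[OF sm_cont[OF sm]]) (auto intro!: continuous_intros)
  then show ?thesis by (rule borel_measurable_continuous_onI)
qed

lemma gx_meas[measurable]: "(\<lambda>t. grad_norm u (x', t)) \<in> borel_measurable borel"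
proof -
  have "continuous_on UNIV (\<lambda>t. grad_norm u (x', t))"
    by (rule continuous_on_compose2[OF sm_grad_cont[OF sm]]) (auto intro!: continuous_intros)
  then show ?thesis by (rule borel_measurable_continuous_onI)
qed

lemma mux_meas[measurable]: "(\<lambda>t. mu_int k (x', t)) \<in> borel_measurable borel"
  unfolding mu_int_def by measurable

lemma H_meas: "(\<lambda>x'. \<integral>\<^sup>+s. ennreal (grad_norm u (x', s) * (1 + norm x' + s) powr (-e)) * indicator {0..} s \<partial>lborel) \<in> borel_measurable lborel"
proof (rule lborel.borel_measurable_nn_integral)
  note [measurable] = fst_meas snd_meas grad_meas[OF sm cpt]
  have "(\<lambda>p. ennreal (grad_norm u p * (1 + norm (fst p) + snd p) powr (-e)) * indicator {0..} (snd p)) \<in> borel_measurable borel"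
    by measurable
  then show "(\<lambda>(x', s). ennreal (grad_norm u (x', s) * (1 + norm x' + s) powr (-e)) * indicator {0..} s) \<in> borel_measurable (lborel \<Otimes>\<^sub>M lborel)"
    by (simp add: lborel_prod split_beta')
qed


lemma ineq1_step:
  defines "Cc \<equiv> 2 / sphere_area n * 2 powr ((real n + 1) / 2)"
  shows "(\<integral>\<^sup>+p. ennreal (indicator upper_half p * \<bar>u p\<bar> * mu_int n p) \<partial>lborel)
    \<le> ennreal (Cc / (real n * (2 / sphere_area (n - 1)))) * (\<integral>\<^sup>+x'. ennreal (\<bar>u (x', 0)\<bar> * mu_bdry n x') \<partial>lborel)
      + ennreal (Cc / real n) * (\<integral>\<^sup>+x'. \<integral>\<^sup>+s. ennreal (grad_norm u (x', s) * (1 + norm x' + s) powr (-real n)) * indicator {0..} s \<partial>lborel \<partial>lborel)"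
proof -
  define e where "e = real n"
  define c2 where "c2 = 2 / sphere_area (n - 1)"
  have e0: "e > 0" using n by (simp add: e_def)
  have c2p: "c2 > 0" unfolding c2_def using sphere_area_pos[of "n - 1"] by simp
  have Cc0: "Cc \<ge> 0" unfolding Cc_def using sphere_area_pos[of n] by simp
  define H where "H x' = (\<integral>\<^sup>+s. ennreal (grad_norm u (x', s) * (1 + norm x' + s) powr (-e)) * indicator {0..} s \<partial>lborel)" for x' :: "real^'m"
  have "(\<integral>\<^sup>+p. ennreal (indicator upper_half p * \<bar>u p\<bar> * mu_int n p) \<partial>lborel)
      = (\<integral>\<^sup>+x'. \<integral>\<^sup>+t. ennreal (indicator upper_half (x', t) * \<bar>u (x', t)\<bar> * mu_int n (x', t)) \<partial>lborel \<partial>lborel)"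
  proof (rule nn_fst_lborel[symmetric])
    note [measurable] = u_meas[OF sm cpt]
    show "(\<lambda>p. ennreal (indicator upper_half p * \<bar>u p\<bar> * mu_int n p)) \<in> borel_measurable borel" by measurable
  qed
  also have "\<dots> = (\<integral>\<^sup>+x'. \<integral>\<^sup>+t. ennreal (indicator {0<..} t * \<bar>u (x', t)\<bar> * mu_int n (x', t)) \<partial>lborel \<partial>lborel)"
    by (intro nn_integral_cong) (simp add: upper_half_eq indicator_def)
  also have "\<dots> \<le> (\<integral>\<^sup>+x'. ennreal (Cc / (e * c2)) * ennreal (\<bar>u (x', 0)\<bar> * mu_bdry n x') + ennreal (Cc / e) * H x' \<partial>lborel)"
  proof (intro nn_integral_mono)
    fix x' :: "real^'m"
    define a where "a = 1 + norm x'"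
    have a1: "a \<ge> 1" by (simp add: a_def)
    have L: "(\<integral>\<^sup>+t. ennreal (indicator {0<..} t * \<bar>u (x', t)\<bar> * mu_int n (x', t)) \<partial>lborel)
      \<le> ennreal \<bar>u (x', 0)\<bar> * ennreal (Cc * (a powr (-e) / e))
       + ennreal (Cc / e) * (\<integral>\<^sup>+s. ennreal (grad_norm u (x', s) * (a + s) powr (-e)) * indicator {0..} s \<partial>lborel)"
    proof (rule line1)
      show "(\<lambda>t. u (x', t)) \<in> borel_measurable borel" "(\<lambda>t. grad_norm u (x', t)) \<in> borel_measurable borel"
        "(\<lambda>t. mu_int n (x', t)) \<in> borel_measurable borel"
        by (rule ux_meas, rule gx_meas, rule mux_meas)
      show "\<And>s. 0 \<le> grad_norm u (x', s)" by (rule grad_norm_nonneg)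
      show "\<And>t. 0 \<le> mu_int n (x', t)" by (rule mu_int_nonneg)
      show "a > 0" "e > 0" "Cc \<ge> 0" using a1 e0 Cc0 by auto
      show "\<And>t. 0 \<le> t \<Longrightarrow> ennreal \<bar>u (x', t) - u (x', 0)\<bar> \<le> (\<integral>\<^sup>+s. ennreal (grad_norm u (x', s)) * indicator {0..t} s \<partial>lborel)"
        by (rule sm_ftc[OF sm])
      show "\<And>t. 0 \<le> t \<Longrightarrow> mu_int n (x', t) \<le> Cc * (a + t) powr (-(e + 1))"
        using mu_int_upper unfolding Cc_def a_def e_def by (simp add: add.assoc)
    qed
    have "ennreal \<bar>u (x', 0)\<bar> * ennreal (Cc * (a powr (-e) / e)) \<le> ennreal (Cc / (e * c2)) * ennreal (\<bar>u (x', 0)\<bar> * mu_bdry n x')"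
    proof -
      have "c2 * a powr (-e) \<le> mu_bdry n x'"
        using mu_bdry_lower[of n x'] unfolding c2_def a_def e_def by simp
      then have "Cc / (e * c2) * (c2 * a powr (-e)) \<le> Cc / (e * c2) * mu_bdry n x'"
        using Cc0 e0 c2p by (intro mult_left_mono) auto
      moreover have "Cc / (e * c2) * (c2 * a powr (-e)) = Cc * (a powr (-e) / e)"
        using c2p e0 by (simp add: field_simps)
      ultimately have "\<bar>u (x', 0)\<bar> * (Cc * (a powr (-e) / e)) \<le> \<bar>u (x', 0)\<bar> * (Cc / (e * c2) * mu_bdry n x')"
        by (intro mult_left_mono) auto
      then have "ennreal (\<bar>u (x', 0)\<bar> * (Cc * (a powr (-e) / e))) \<le> ennreal (Cc / (e * c2) * (\<bar>u (x', 0)\<bar> * mu_bdry n x'))"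
        by (intro ennreal_leI) (simp add: mult_ac)
      moreover have "ennreal (\<bar>u (x', 0)\<bar> * (Cc * (a powr (-e) / e))) = ennreal \<bar>u (x', 0)\<bar> * ennreal (Cc * (a powr (-e) / e))"
        by (rule ennreal_mult') simp
      moreover have "ennreal (Cc / (e * c2) * (\<bar>u (x', 0)\<bar> * mu_bdry n x')) = ennreal (Cc / (e * c2)) * ennreal (\<bar>u (x', 0)\<bar> * mu_bdry n x')"
        by (rule ennreal_mult') (use Cc0 e0 c2p in simp)
      ultimately show ?thesis by simp
    qed
    then show "(\<integral>\<^sup>+t. ennreal (indicator {0<..} t * \<bar>u (x', t)\<bar> * mu_int n (x', t)) \<partial>lborel)
      \<le> ennreal (Cc / (e * c2)) * ennreal (\<bar>u (x', 0)\<bar> * mu_bdry n x') + ennreal (Cc / e) * H x'"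
      using L unfolding H_def a_def by (meson add_right_mono order.trans)
  qed
  also have "\<dots> = ennreal (Cc / (e * c2)) * (\<integral>\<^sup>+x'. ennreal (\<bar>u (x', 0)\<bar> * mu_bdry n x') \<partial>lborel) + ennreal (Cc / e) * integral\<^sup>N lborel H"
  proof -
    have [measurable]: "H \<in> borel_measurable lborel" unfolding H_def[abs_def] by (rule H_meas)
    show ?thesis by (subst nn_integral_add) (auto simp: nn_integral_cmult)
  qed
  finally show ?thesis unfolding H_def[abs_def] e_def c2_def .
qed

lemma I_meas: "(\<lambda>x'. \<integral>\<^sup>+t. ennreal (indicator {0<..} t * \<bar>u (x', t)\<bar> * mu_int k (x', t)) \<partial>lborel) \<in> borel_measurable lborel"
proof (rule lborel.borel_measurable_nn_integral)
  have "(\<lambda>p. ennreal (indicator upper_half p * \<bar>u p\<bar> * mu_int k p)) \<in> borel_measurable borel"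
  proof -
    note [measurable] = u_meas[OF sm cpt]
    show ?thesis by measurable
  qed
  moreover have "(\<lambda>p. ennreal (indicator upper_half p * \<bar>u p\<bar> * mu_int k p)) = (\<lambda>(x', t). ennreal (indicator {0<..} t * \<bar>u (x', t)\<bar> * mu_int k (x', t)))"
    by (auto simp: upper_half_eq indicator_def)
  ultimately show "(\<lambda>(x', t). ennreal (indicator {0<..} t * \<bar>u (x', t)\<bar> * mu_int k (x', t))) \<in> borel_measurable (lborel \<Otimes>\<^sub>M lborel)"
    by (simp add: lborel_prod)
qed

lemma I_iter: "(\<integral>\<^sup>+p. ennreal (indicator upper_half p * \<bar>u p\<bar> * mu_int k p) \<partial>lborel)
      = (\<integral>\<^sup>+x'. \<integral>\<^sup>+t. ennreal (indicator {0<..} t * \<bar>u (x', t)\<bar> * mu_int k (x', t)) \<partial>lborel \<partial>lborel)"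
proof -
  have "(\<integral>\<^sup>+p. ennreal (indicator upper_half p * \<bar>u p\<bar> * mu_int k p) \<partial>lborel)
      = (\<integral>\<^sup>+x'. \<integral>\<^sup>+t. ennreal (indicator upper_half (x', t) * \<bar>u (x', t)\<bar> * mu_int k (x', t)) \<partial>lborel \<partial>lborel)"
  proof (rule nn_fst_lborel[symmetric])
    note [measurable] = u_meas[OF sm cpt]
    show "(\<lambda>p. ennreal (indicator upper_half p * \<bar>u p\<bar> * mu_int k p)) \<in> borel_measurable borel" by measurable
  qed
  also have "\<dots> = (\<integral>\<^sup>+x'. \<integral>\<^sup>+t. ennreal (indicator {0<..} t * \<bar>u (x', t)\<bar> * mu_int k (x', t)) \<partial>lborel \<partial>lborel)"
    by (intro nn_integral_cong) (simp add: upper_half_eq indicator_def)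
  finally show ?thesis .
qed

lemma ineq2_step:
  defines "D \<equiv> 2 / sphere_area (n - 1) * 2 powr (real n / 2)"
  shows "(\<integral>\<^sup>+x'. ennreal (\<bar>u (x', 0)\<bar> * mu_bdry n x') \<partial>lborel)
    \<le> ennreal (D * 2 powr (real n + 1) / (2 / sphere_area n)) * (\<integral>\<^sup>+p. ennreal (indicator upper_half p * \<bar>u p\<bar> * mu_int n p) \<partial>lborel)
      + ennreal (D * 2 powr real n) * (\<integral>\<^sup>+x'. \<integral>\<^sup>+s. ennreal (grad_norm u (x', s) * (1 + norm x' + s) powr (-real n)) * indicator {0..} s \<partial>lborel \<partial>lborel)"
proof -
  define e where "e = real n"
  define L where "L = 2 / sphere_area n"
  have e0: "e > 0" using n by (simp add: e_def)
  have Lp: "L > 0" unfolding L_def using sphere_area_pos[of n] by simp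
  have D0: "D \<ge> 0" unfolding D_def using sphere_area_pos[of "n - 1"] by simp
  define H where "H x' = (\<integral>\<^sup>+s. ennreal (grad_norm u (x', s) * (1 + norm x' + s) powr (-e)) * indicator {0..} s \<partial>lborel)" for x' :: "real^'m"
  define I where "I x' = (\<integral>\<^sup>+t. ennreal (indicator {0<..} t * \<bar>u (x', t)\<bar> * mu_int n (x', t)) \<partial>lborel)" for x' :: "real^'m"
  have "(\<integral>\<^sup>+x'. ennreal (\<bar>u (x', 0)\<bar> * mu_bdry n x') \<partial>lborel)
      \<le> (\<integral>\<^sup>+x'. ennreal (D * 2 powr (e + 1) / L) * I x' + ennreal (D * 2 powr e) * H x' \<partial>lborel)"
  proof (intro nn_integral_mono)
    fix x' :: "real^'m"
    define a where "a = 1 + norm x'"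
    have a1: "a \<ge> 1" by (simp add: a_def)
    show "ennreal (\<bar>u (x', 0)\<bar> * mu_bdry n x') \<le> ennreal (D * 2 powr (e + 1) / L) * I x' + ennreal (D * 2 powr e) * H x'"
      unfolding I_def H_def add.assoc[symmetric] a_def[symmetric]
    proof (rule line2)
      show "(\<lambda>t. u (x', t)) \<in> borel_measurable borel" "(\<lambda>t. grad_norm u (x', t)) \<in> borel_measurable borel"
        "(\<lambda>t. mu_int n (x', t)) \<in> borel_measurable borel"
        by (rule ux_meas, rule gx_meas, rule mux_meas)
      show "\<And>s. 0 \<le> grad_norm u (x', s)" by (rule grad_norm_nonneg)
      show "\<And>t. 0 \<le> mu_int n (x', t)" by (rule mu_int_nonneg)
      show "1 \<le> a" "e > 0" "L > 0" "D \<ge> 0" "0 \<le> mu_bdry n x'" using a1 e0 Lp D0 mu_bdry_nonneg by auto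
      show "\<And>t. 0 \<le> t \<Longrightarrow> ennreal \<bar>u (x', t) - u (x', 0)\<bar> \<le> (\<integral>\<^sup>+s. ennreal (grad_norm u (x', s)) * indicator {0..t} s \<partial>lborel)"
        by (rule sm_ftc[OF sm])
      show "\<And>t. 0 \<le> t \<Longrightarrow> t \<le> a \<Longrightarrow> L * (2 * a) powr (-(e + 1)) \<le> mu_int n (x', t)"
        using mu_int_lower unfolding L_def a_def e_def by simp
      show "mu_bdry n x' \<le> D * a powr (-e)"
        using mu_bdry_upper[of n x'] unfolding D_def a_def e_def by simp
    qed
  qed
  also have "\<dots> = ennreal (D * 2 powr (e + 1) / L) * integral\<^sup>N lborel I + ennreal (D * 2 powr e) * integral\<^sup>N lborel H"
  proof -
    have [measurable]: "H \<in> borel_measurable lborel" unfolding H_def[abs_def] by (rule H_meas)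
    have [measurable]: "I \<in> borel_measurable lborel" unfolding I_def[abs_def] by (rule I_meas)
    show ?thesis by (subst nn_integral_add) (auto simp: nn_integral_cmult)
  qed
  also have "integral\<^sup>N lborel I = (\<integral>\<^sup>+p. ennreal (indicator upper_half p * \<bar>u p\<bar> * mu_int n p) \<partial>lborel)"
    unfolding I_def[abs_def] by (rule I_iter[symmetric])
  finally show ?thesis unfolding H_def[abs_def] e_def L_def .
qed
end


theorem lemmaA1:
  fixes n :: nat
  defines "n \<equiv> CARD('m::finite) + 1"
  shows "\<exists>C>0. \<forall>u :: (real^'m) \<times> real \<Rightarrow> real.
    smooth_fun u \<and> compact (closure {x. u x \<noteq> 0}) \<longrightarrow>
      (LINT p|lborel. indicator upper_half p * \<bar>u p\<bar> * mu_int n p)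
        \<le> C * ((LINT x'|lborel. \<bar>u (x', 0)\<bar> * mu_bdry n x')
               + (LINT p|lborel. indicator upper_half p * grad_norm u p ^ n) powr (1 / real n))
    \<and> (LINT x'|lborel. \<bar>u (x', 0)\<bar> * mu_bdry n x')
        \<le> C * ((LINT p|lborel. indicator upper_half p * \<bar>u p\<bar> * mu_int n p)
               + (LINT p|lborel. indicator upper_half p * grad_norm u p ^ n) powr (1 / real n))"
proof -
  have n: "n = CARD('m) + 1" by (simp add: n_def)
  define e where "e = real n"
  have e1: "e > 1" using n by (simp add: e_def)
  define Cc where "Cc = 2 / sphere_area n * 2 powr ((real n + 1) / 2)"
  define c2 where "c2 = 2 / sphere_area (n - 1)"
  define D where "D = 2 / sphere_area (n - 1) * 2 powr (real n / 2)"
  define HC where "HC = 1 / real n + Aconst n CARD('m) / (real n / (real n - 1))"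
  define K1 where "K1 = Cc / (real n * c2)"
  define K2 where "K2 = Cc / real n"
  define K4 where "K4 = D * 2 powr (real n + 1) / (2 / sphere_area n)"
  define K5 where "K5 = D * 2 powr real n"
  have s1: "sphere_area n > 0" "sphere_area (n - 1) > 0" by (rule sphere_area_pos)+
  have Cc0: "Cc \<ge> 0" unfolding Cc_def using s1 by simp
  have c20: "c2 > 0" unfolding c2_def using s1 by simp
  have D0: "D \<ge> 0" unfolding D_def using s1 by simp
  have HC0: "HC \<ge> 0" unfolding HC_def using Aconst_nonneg[of n "CARD('m)"] n e1 e_def by simp
  have K10: "K1 \<ge> 0" unfolding K1_def using Cc0 c20 by simp
  have K20: "K2 \<ge> 0" unfolding K2_def using Cc0 by simp
  have K40: "K4 \<ge> 0" unfolding K4_def using D0 s1 by simp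
  have K50: "K5 \<ge> 0" unfolding K5_def using D0 by simp
  define C where "C = K1 + K2 * HC + K4 + K5 * HC + 1"
  have Cpos: "C > 0" unfolding C_def using K10 K20 K40 K50 HC0 by (simp add: add_nonneg_pos)
  have K1C: "K1 \<le> C" "K2 * HC \<le> C" "K4 \<le> C" "K5 * HC \<le> C"
    unfolding C_def using K10 K20 K40 K50 HC0 by simp_all
  show ?thesis
  proof (intro exI[of _ C] conjI allI impI Cpos)
    fix u :: "(real^'m) \<times> real \<Rightarrow> real"
    assume "smooth_fun u \<and> compact (closure {x. u x \<noteq> 0})"
    then have sm: "smooth_fun u" and cpt: "compact (closure {x. u x \<noteq> 0})" by auto
    define LB where "LB = (LINT x'|lborel. \<bar>u (x', 0)\<bar> * mu_bdry n x')"
    define LI where "LI = (LINT p|lborel. indicator upper_half p * \<bar>u p\<bar> * mu_int n p)"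
    define N where "N = (LINT p|lborel. indicator upper_half p * grad_norm u p ^ n) powr (1 / real n)"
    have N0: "N \<ge> 0" unfolding N_def by simp
    have LB0: "LB \<ge> 0" unfolding LB_def
      by (intro integral_nonneg_AE AE_I2 mult_nonneg_nonneg abs_ge_zero mu_bdry_nonneg)
    have LI0: "LI \<ge> 0" unfolding LI_def
      by (intro integral_nonneg_AE AE_I2 mult_nonneg_nonneg abs_ge_zero mu_int_nonneg) simp
    have Bint: "(\<integral>\<^sup>+x'. ennreal (\<bar>u (x', 0)\<bar> * mu_bdry n x') \<partial>lborel) = ennreal LB"
      unfolding LB_def by (rule nn_integral_eq_integral[OF int_B[OF sm cpt]]) (intro AE_I2 mult_nonneg_nonneg abs_ge_zero mu_bdry_nonneg)
    have Iint: "(\<integral>\<^sup>+p. ennreal (indicator upper_half p * \<bar>u p\<bar> * mu_int n p) \<partial>lborel) = ennreal LI"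
      unfolding LI_def by (rule nn_integral_eq_integral[OF int_I[OF sm cpt]]) (intro AE_I2 mult_nonneg_nonneg abs_ge_zero mu_int_nonneg, simp)
    have Hint: "(\<integral>\<^sup>+x'. \<integral>\<^sup>+s. ennreal (grad_norm u (x', s) * (1 + norm x' + s) powr (-real n)) * indicator {0..} s \<partial>lborel \<partial>lborel)
       \<le> ennreal (N * HC)"
      unfolding N_def HC_def by (rule holder_step[OF sm cpt n])
    have "ennreal LI \<le> ennreal K1 * ennreal LB + ennreal K2 * ennreal (N * HC)"
      using ineq1_step[OF sm cpt n] Hint unfolding Bint Iint K1_def K2_def c2_def Cc_def
      by (meson add_left_mono mult_left_mono order.trans zero_le)
    also have "\<dots> = ennreal (K1 * LB + K2 * (N * HC))"
      using K10 K20 LB0 N0 HC0 by (simp add: ennreal_plus ennreal_mult')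
    finally have "LI \<le> K1 * LB + K2 * (N * HC)"
      using K10 K20 LB0 N0 HC0 by (subst (asm) ennreal_le_iff) auto
    also have "\<dots> \<le> C * LB + C * N"
    proof -
      have "K1 * LB \<le> C * LB" using K1C LB0 by (intro mult_right_mono) auto
      moreover have "K2 * HC * N \<le> C * N" using K1C N0 by (intro mult_right_mono) auto
      ultimately show ?thesis by (simp add: mult_ac)
    qed
    finally show "LI \<le> C * (LB + N)" by (simp add: distrib_left)
    have "ennreal LB \<le> ennreal K4 * ennreal LI + ennreal K5 * ennreal (N * HC)"
      using ineq2_step[OF sm cpt n] Hint unfolding Bint Iint K4_def K5_def D_def
      by (meson add_left_mono mult_left_mono order.trans zero_le)
    also have "\<dots> = ennreal (K4 * LI + K5 * (N * HC))"
      using K40 K50 LI0 N0 HC0 by (simp add: ennreal_plus ennreal_mult')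
    finally have "LB \<le> K4 * LI + K5 * (N * HC)"
      using K40 K50 LI0 N0 HC0 by (subst (asm) ennreal_le_iff) auto
    also have "\<dots> \<le> C * LI + C * N"
    proof -
      have "K4 * LI \<le> C * LI" using K1C LI0 by (intro mult_right_mono) auto
      moreover have "K5 * HC * N \<le> C * N" using K1C N0 by (intro mult_right_mono) auto
      ultimately show ?thesis by (simp add: mult_ac)
    qed
    finally show "LB \<le> C * (LI + N)" by (simp add: distrib_left)
  qed
qed

end
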